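(* Let $n,m\ge1$, $r>0$, and let $\mathbf b_1,\dots,\mathbf b_m\in[0,\infty)^n$ be nonzero vectors with nonnegative entries. Consider the system, in the unknown $\mathbf u\in\mathbb{R}^n$, $$\frac{r}{m}\sum_{j=1}^m\frac{\mathbf b_j}{\mathbf u\cdot\mathbf b_j}-\mathbf u=0 .$$ Then this system has at most one solution $\mathbf u$ with $\mathbf u\cdot\mathbf b_j>0$ for all $j=1,\dots,m$; and if $\mathbf u$ is such a solution, then $\mathbf u\cdot\mathbf u=r$ and $\widehat l(\mathbf u)=\prod_{j=1}^m(\mathbf u\cdot\mathbf b_j)$ equals the global maximum of $\widehat l$ on the sphere $\{\mathbf u\in\mathbb{R}^n:\sum_{i=1}^n u_i^2=r\}$.
   Context: The system is the Lagrange multiplier condition (with the multiplier eliminated) for maximizing $\widehat l(\mathbf u)=\prod_j(\mathbf u\cdot\mathbf b_j)$ on the sphere $\sum_iu_i^2=r$; in the application $b_{ij}=v_i\varphi_i(x_j)$ for nonnegative window functions $\varphi_i$ and observations $x_j$. *)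

theory Defs
  imports "HOL-Analysis.Analysis"
begin

definition lhat :: "nat \<Rightarrow> (nat \<Rightarrow> real^'n) \<Rightarrow> real^'n \<Rightarrow> real" where
  "lhat m b u = (\<Prod>j<m. u \<bullet> b j)"

definition is_pos_solution :: "nat \<Rightarrow> real \<Rightarrow> (nat \<Rightarrow> real^'n) \<Rightarrow> real^'n \<Rightarrow> bool" where
  "is_pos_solution m r b u \<longleftrightarrow>
     (\<forall>j<m. u \<bullet> b j > 0) \<and>
     (r / real m) *\<^sub>R (\<Sum>j<m. (1 / (u \<bullet> b j)) *\<^sub>R b j) - u = 0"

end

theory Submission
  imports Defs
begin

lemma amgm:
  fixes x :: "'a \<Rightarrow> real"
  assumes "finite S" "S \<noteq> {}" "\<And>i. i \<in> S \<Longrightarrow> x i \<ge> 0"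
  shows "(\<Prod>i\<in>S. x i) \<le> ((\<Sum>i\<in>S. x i) / card S) ^ card S"
proof -
  have c: "card S > 0" using assms by (simp add: card_gt_0_iff)
  have P: "(\<Prod>i\<in>S. x i) \<ge> 0" using assms by (simp add: prod_nonneg)
  have "(\<Prod>i\<in>S. x i) powr (1 / card S) \<le> (\<Sum>i \<in> S. x i / card S)"
    using arith_geom_mean[OF assms] by simp
  also have "\<dots> = (\<Sum>i\<in>S. x i) / card S" by (simp add: sum_divide_distrib)
  finally have h: "(\<Prod>i\<in>S. x i) powr (1 / card S) \<le> (\<Sum>i\<in>S. x i) / card S" .
  have "(\<Prod>i\<in>S. x i) = ((\<Prod>i\<in>S. x i) powr (1 / card S)) ^ card S"
  proof (cases "(\<Prod>i\<in>S. x i) = 0")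
    case True thus ?thesis using c by simp
  next
    case False
    hence pp: "(\<Prod>i\<in>S. x i) > 0" using P by simp
    have "((\<Prod>i\<in>S. x i) powr (1 / card S)) ^ card S = ((\<Prod>i\<in>S. x i) powr (1 / card S)) powr real (card S)"
      using pp by (simp add: powr_realpow)
    also have "\<dots> = (\<Prod>i\<in>S. x i)" using pp c by (simp add: powr_powr)
    finally show ?thesis by simp
  qed
  also have "\<dots> \<le> ((\<Sum>i\<in>S. x i) / card S) ^ card S"
    by (rule power_mono[OF h]) simp
  finally show ?thesis .
qed

lemma sol_inner:
  fixes b :: "nat \<Rightarrow> real^'n"
  assumes "is_pos_solution m r b u"
  shows "v \<bullet> u = (r / real m) * (\<Sum>j<m. (v \<bullet> b j) / (u \<bullet> b j))"
proof -
  have "u = (r / real m) *\<^sub>R (\<Sum>j<m. (1 / (u \<bullet> b j)) *\<^sub>R b j)"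
    using assms unfolding is_pos_solution_def by simp
  hence "v \<bullet> u = v \<bullet> ((r / real m) *\<^sub>R (\<Sum>j<m. (1 / (u \<bullet> b j)) *\<^sub>R b j))" by simp
  also have "\<dots> = (r / real m) * (\<Sum>j<m. (v \<bullet> b j) / (u \<bullet> b j))"
    by (simp add: inner_sum_right)
  finally show ?thesis .
qed

lemma sol_norm:
  fixes b :: "nat \<Rightarrow> real^'n"
  assumes "is_pos_solution m r b u" "m \<ge> 1"
  shows "u \<bullet> u = r"
proof -
  have "u \<bullet> u = (r / real m) * (\<Sum>j<m. (u \<bullet> b j) / (u \<bullet> b j))" by (rule sol_inner[OF assms(1)])
  also have "(\<Sum>j<m. (u \<bullet> b j) / (u \<bullet> b j)) = (\<Sum>j<m. 1)"
    using assms(1) unfolding is_pos_solution_def by (intro sum.cong) auto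
  finally show ?thesis using assms(2) by simp
qed

lemma key:
  fixes b :: "nat \<Rightarrow> real^'n"
  assumes sol: "is_pos_solution m r b u" and m: "m \<ge> 1" and r: "r > 0"
    and vb: "\<And>j. j < m \<Longrightarrow> v \<bullet> b j \<ge> 0"
  shows "lhat m b v \<le> lhat m b u * ((v \<bullet> u) / r) ^ m"
proof -
  have ub: "\<And>j. j < m \<Longrightarrow> u \<bullet> b j > 0" using sol unfolding is_pos_solution_def by auto
  define x where "x j = (v \<bullet> b j) / (u \<bullet> b j)" for j
  have xn: "\<And>j. j \<in> {..<m} \<Longrightarrow> x j \<ge> 0" using vb ub unfolding x_def
    by (simp add: less_imp_le)
  have lu: "lhat m b u > 0" unfolding lhat_def using ub by (intro prod_pos) auto
  have "lhat m b v = lhat m b u * (\<Prod>j<m. x j)"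
    unfolding lhat_def x_def using ub
    by (simp add: prod_dividef less_imp_neq[symmetric] prod_zero_iff)
  also have "(\<Prod>j<m. x j) \<le> ((\<Sum>j<m. x j) / card {..<m}) ^ card {..<m}"
    by (rule amgm) (use xn m in \<open>auto simp: lessThan_empty_iff\<close>)
  also have "(\<Sum>j<m. x j) / card {..<m} = (v \<bullet> u) / r"
    using sol_inner[OF sol, of v] r m unfolding x_def by (simp add: field_simps)
  finally show ?thesis using lu by simp
qed

lemma cs_r:
  fixes u v :: "real^'n"
  assumes "u \<bullet> u = r" "v \<bullet> v = r"
  shows "v \<bullet> u \<le> r"
proof -
  have "v \<bullet> u \<le> norm v * norm u" by (rule norm_cauchy_schwarz)
  also have "\<dots> = sqrt r * sqrt r" using assms by (simp add: norm_eq_sqrt_inner)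
  also have "\<dots> = r" using assms(1) inner_ge_zero[of u] by simp
  finally show ?thesis .
qed

lemma sol_le:
  fixes b :: "nat \<Rightarrow> real^'n"
  assumes sol: "is_pos_solution m r b u" and m: "m \<ge> 1" and r: "r > 0"
    and vb: "\<And>j. j < m \<Longrightarrow> v \<bullet> b j \<ge> 0" and vv: "v \<bullet> v = r"
  shows "lhat m b v \<le> lhat m b u"
proof -
  have ub: "\<And>j. j < m \<Longrightarrow> u \<bullet> b j > 0" using sol unfolding is_pos_solution_def by auto
  have lu: "lhat m b u > 0" unfolding lhat_def using ub by (intro prod_pos) auto
  have c1: "v \<bullet> u \<le> r" by (rule cs_r[OF sol_norm[OF sol m] vv])
  have c0: "v \<bullet> u \<ge> 0" unfolding sol_inner[OF sol, of v] using r vb ub m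
    by (intro mult_nonneg_nonneg sum_nonneg divide_nonneg_pos) auto
  have "((v \<bullet> u) / r) ^ m \<le> 1" using c0 c1 r by (intro power_le_one) auto
  hence "lhat m b u * ((v \<bullet> u) / r) ^ m \<le> lhat m b u" using lu
    by (simp add: mult_left_le)
  with key[OF sol m r vb] show ?thesis by linarith
qed

theorem theorem3:
  fixes m :: nat and r :: real and b :: "nat \<Rightarrow> real^'n"
  assumes "m \<ge> 1" and "r > 0"
    and "\<And>j. j < m \<Longrightarrow> b j \<noteq> 0"
    and "\<And>j i. j < m \<Longrightarrow> b j $ i \<ge> 0"
  shows "(\<forall>u v. is_pos_solution m r b u \<and> is_pos_solution m r b v \<longrightarrow> u = v)
    \<and> (\<forall>u. is_pos_solution m r b u \<longrightarrow>
          u \<bullet> u = r \<and>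
          lhat m b u = (GREATEST t. \<exists>v. (\<Sum>i\<in>UNIV. (v $ i)\<^sup>2) = r \<and> t = lhat m b v))"
proof (intro conjI allI impI)
  fix u v assume "is_pos_solution m r b u \<and> is_pos_solution m r b v"
  hence su: "is_pos_solution m r b u" and sv: "is_pos_solution m r b v" by auto
  have ub: "\<And>j. j < m \<Longrightarrow> u \<bullet> b j > 0" using su unfolding is_pos_solution_def by auto
  have vb: "\<And>j. j < m \<Longrightarrow> v \<bullet> b j > 0" using sv unfolding is_pos_solution_def by auto
  have lu: "lhat m b u > 0" unfolding lhat_def using ub by (intro prod_pos) auto
  have lv: "lhat m b v > 0" unfolding lhat_def using vb by (intro prod_pos) auto
  have uu: "u \<bullet> u = r" by (rule sol_norm[OF su assms(1)])
  have vv: "v \<bullet> v = r" by (rule sol_norm[OF sv assms(1)])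
  have c1: "v \<bullet> u \<le> r" by (rule cs_r[OF uu vv])
  have c0: "v \<bullet> u \<ge> 0" unfolding sol_inner[OF su, of v] using assms(1,2) vb ub
    by (intro mult_nonneg_nonneg sum_nonneg divide_nonneg_pos less_imp_le) auto
  have eq: "v \<bullet> u = r"
  proof (rule ccontr)
    assume "v \<bullet> u \<noteq> r"
    hence lt: "(v \<bullet> u) / r < 1" using c1 assms(2) by simp
    have "((v \<bullet> u) / r) ^ m < 1" using power_strict_mono[OF lt, of m] c0 assms(1,2) by simp
    hence "lhat m b u * ((v \<bullet> u) / r) ^ m < lhat m b u" using lu by simp
    hence "lhat m b v < lhat m b u" using key[OF su assms(1,2), of v] vb by (simp add: less_imp_le)
    moreover have "lhat m b u \<le> lhat m b v"
      using sol_le[OF sv assms(1,2), of u] ub uu by (simp add: less_imp_le)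
    ultimately show False by simp
  qed
  have "(u - v) \<bullet> (u - v) = u \<bullet> u - 2 * (v \<bullet> u) + v \<bullet> v"
    by (simp add: inner_diff inner_commute)
  also have "\<dots> = 0" using uu vv eq by simp
  finally show "u = v" by simp
next
  fix u assume su: "is_pos_solution m r b u"
  show uu: "u \<bullet> u = r" by (rule sol_norm[OF su assms(1)])
  have sq: "\<And>v::real^'n. (\<Sum>i\<in>UNIV. (v $ i)\<^sup>2) = v \<bullet> v"
    by (simp add: inner_vec_def power2_eq_square)
  show "lhat m b u = (GREATEST t. \<exists>v. (\<Sum>i\<in>UNIV. (v $ i)\<^sup>2) = r \<and> t = lhat m b v)"
  proof (rule Greatest_equality[symmetric])
    show "\<exists>v. (\<Sum>i\<in>UNIV. (v $ i)\<^sup>2) = r \<and> lhat m b u = lhat m b v"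
      using uu sq by auto
  next
    fix t assume "\<exists>v. (\<Sum>i\<in>UNIV. (v $ i)\<^sup>2) = r \<and> t = lhat m b v"
    then obtain v where vv: "v \<bullet> v = r" and t: "t = lhat m b v" using sq by auto
    define w :: "real^'n" where "w = (\<chi> i. \<bar>v $ i\<bar>)"
    have ww: "w \<bullet> w = r" using vv unfolding w_def inner_vec_def
      by (simp add: abs_mult_self_eq)
    have bnd: "\<bar>v \<bullet> b j\<bar> \<le> w \<bullet> b j" if "j < m" for j
    proof -
      have "\<bar>v \<bullet> b j\<bar> = \<bar>\<Sum>i\<in>UNIV. v $ i * b j $ i\<bar>" by (simp add: inner_vec_def)
      also have "\<dots> \<le> (\<Sum>i\<in>UNIV. \<bar>v $ i * b j $ i\<bar>)" by (rule sum_abs)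
      also have "\<dots> = (\<Sum>i\<in>UNIV. \<bar>v $ i\<bar> * b j $ i)"
        using assms(4)[OF that] by (simp add: abs_mult)
      also have "\<dots> = w \<bullet> b j" by (simp add: w_def inner_vec_def)
      finally show ?thesis .
    qed
    have wb: "\<And>j. j < m \<Longrightarrow> w \<bullet> b j \<ge> 0" using bnd by (meson abs_ge_zero order_trans)
    have "t \<le> \<bar>lhat m b v\<bar>" using t by simp
    also have "\<dots> = (\<Prod>j<m. \<bar>v \<bullet> b j\<bar>)" unfolding lhat_def by (rule abs_prod)
    also have "\<dots> \<le> (\<Prod>j<m. w \<bullet> b j)" using bnd by (intro prod_mono) auto
    also have "\<dots> = lhat m b w" by (simp add: lhat_def)
    also have "\<dots> \<le> lhat m b u" by (rule sol_le[OF su assms(1,2) wb ww])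
    finally show "t \<le> lhat m b u" .
  qed
qed

end
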